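(* For $n\ge1$ and $1\le\ell\le n$ let $\mathcal{A}^{\mathrm{s\text{-}ind}}_{n,\ell}$ be the set of permutations $\sigma$ of $\{1,\dots,n\}$ avoiding $1324$ and $1423$ that are skew-indecomposable and satisfy $\sigma(\ell)=1$, and let $a_{n,\ell}=\lvert\mathcal{A}^{\mathrm{s\text{-}ind}}_{n,\ell}\rvert$. Then $a_{1,1}=1$, $a_{2,1}=1$, and for $n\ge3$, \[ a_{n,\ell}=2a_{n-1,\ell}+\sum_{j=1}^{\ell-1}a_{n-1,j}\quad\text{for }1\le\ell\le n-1. \] Moreover, the generating function $g(x,u)=\sum_{n=1}^\infty\sum_{\ell=1}^n a_{n,\ell}u^\ell x^n$ satisfies \[ g(x,u)=\frac{ux\Big[4u-3+4x-3ux-\sqrt{1-6ux+u^2x^2}\Big]}{4\big(u-1-ux+2x\big)}. \]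
   Context: A permutation avoids a pattern $p$ if no subsequence of its one-line notation is order-isomorphic to $p$. For permutations $\pi$ of size $m$ and $\tau$ of size $r$, the skew sum $\pi\ominus\tau$ is the permutation of size $m+r$ whose first $m$ entries are $\pi(i)+r$ and whose last $r$ entries are $\tau(j)$. A permutation is skew-decomposable if it equals $\pi\ominus\tau$ for nonempty $\pi,\tau$, and skew-indecomposable otherwise. Note that $a_{n,n}=0$ for $n\ge2$. *)

theory Defs
  imports "HOL-Combinatorics.Permutations" Complex_Main
begin

text \<open>Permutations of size n are functions sigma with sigma permutes {1..n};
  sigma i is the i-th entry of the one-line notation (1-based).
  Patterns are given by their one-line notation as lists (entry i+1 is p!i).\<close>

definition contains_pattern :: "nat \<Rightarrow> (nat \<Rightarrow> nat) \<Rightarrow> nat list \<Rightarrow> bool" where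
  "contains_pattern n \<sigma> p \<longleftrightarrow>
     (\<exists>\<iota> :: nat \<Rightarrow> nat.
        (\<forall>i < length p. \<iota> i \<in> {1..n}) \<and>
        (\<forall>i j. i < j \<longrightarrow> j < length p \<longrightarrow> \<iota> i < \<iota> j) \<and>
        (\<forall>i < length p. \<forall>j < length p. \<sigma> (\<iota> i) < \<sigma> (\<iota> j) \<longleftrightarrow> p ! i < p ! j))"

definition avoids_pattern :: "nat \<Rightarrow> (nat \<Rightarrow> nat) \<Rightarrow> nat list \<Rightarrow> bool" where
  "avoids_pattern n \<sigma> p \<longleftrightarrow> \<not> contains_pattern n \<sigma> p"

definition skew_sum :: "nat \<Rightarrow> (nat \<Rightarrow> nat) \<Rightarrow> nat \<Rightarrow> (nat \<Rightarrow> nat) \<Rightarrow> (nat \<Rightarrow> nat)" where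
  "skew_sum m \<pi> r \<tau> = (\<lambda>i. if i \<in> {1..m} then \<pi> i + r
                            else if i \<in> {m+1..m+r} then \<tau> (i - m) else i)"

definition skew_decomposable :: "nat \<Rightarrow> (nat \<Rightarrow> nat) \<Rightarrow> bool" where
  "skew_decomposable n \<sigma> \<longleftrightarrow>
     (\<exists>m r \<pi> \<tau>. m \<ge> 1 \<and> r \<ge> 1 \<and> m + r = n \<and> \<pi> permutes {1..m} \<and> \<tau> permutes {1..r}
                \<and> \<sigma> = skew_sum m \<pi> r \<tau>)"

definition skew_indecomposable :: "nat \<Rightarrow> (nat \<Rightarrow> nat) \<Rightarrow> bool" where
  "skew_indecomposable n \<sigma> \<longleftrightarrow> \<not> skew_decomposable n \<sigma>"

definition A_sind :: "nat \<Rightarrow> nat \<Rightarrow> (nat \<Rightarrow> nat) set" where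
  "A_sind n l = {\<sigma>. \<sigma> permutes {1..n} \<and> avoids_pattern n \<sigma> [1,3,2,4] \<and> avoids_pattern n \<sigma> [1,4,2,3]
                   \<and> skew_indecomposable n \<sigma> \<and> \<sigma> l = 1}"

definition a_sind :: "nat \<Rightarrow> nat \<Rightarrow> nat" where
  "a_sind n l = card (A_sind n l)"

end

theory Submission
  imports Defs
begin
definition Rec :: "(nat \<Rightarrow> nat \<Rightarrow> nat) \<Rightarrow> bool" where
  "Rec a \<longleftrightarrow> (\<forall>n\<ge>1. \<forall>l. (l = 0 \<or> l > n) \<longrightarrow> a n l = 0) \<and> a 1 1 = 1 \<and> a 2 1 = 1 \<and>
     (\<forall>n\<ge>2. a n n = 0) \<and>
     (\<forall>n\<ge>3. \<forall>l. 1 \<le> l \<and> l \<le> n - 1 \<longrightarrow> a n l = 2 * a (n - 1) l + (\<Sum>j = 1..l - 1. a (n - 1) j))"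

lemma geom2: "(\<Sum>j = 1..l - 1. (2::nat) ^ j) \<le> 2 ^ l"
proof (induction l)
  case 0 then show ?case by simp
next
  case (Suc l)
  show ?case
  proof (cases "l = 0")
    case True then show ?thesis by simp
  next
    case False
    then have "{1..Suc l - 1} = insert l {1..l-1}" by auto
    then have "(\<Sum>j = 1..Suc l - 1. (2::nat) ^ j) = 2^l + (\<Sum>j = 1..l - 1. 2 ^ j)"
      using False by simp
    with Suc show ?thesis by simp
  qed
qed

lemma RecD:
  assumes "Rec a"
  shows "\<And>n l. n \<ge> 1 \<Longrightarrow> (l = 0 \<or> l > n) \<Longrightarrow> a n l = 0"
    and "a 1 1 = 1" and "a 2 1 = 1" and "\<And>n. n \<ge> 2 \<Longrightarrow> a n n = 0"
    and "\<And>n l. n \<ge> 3 \<Longrightarrow> 1 \<le> l \<Longrightarrow> l \<le> n - 1 \<Longrightarrow> a n l = 2 * a (n - 1) l + (\<Sum>j = 1..l - 1. a (n - 1) j)"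
proof -
  note C = assms[unfolded Rec_def]
  note P1 = conjunct1[OF C]
  note P2 = conjunct1[OF conjunct2[OF C]]
  note P3 = conjunct1[OF conjunct2[OF conjunct2[OF C]]]
  note P4 = conjunct1[OF conjunct2[OF conjunct2[OF conjunct2[OF C]]]]
  note P5 = conjunct2[OF conjunct2[OF conjunct2[OF conjunct2[OF C]]]]
  show "\<And>n l. n \<ge> 1 \<Longrightarrow> (l = 0 \<or> l > n) \<Longrightarrow> a n l = 0" using P1 by auto
  show "a 1 1 = 1" by (rule P2)
  show "a 2 1 = 1" by (rule P3)
  show "\<And>n. n \<ge> 2 \<Longrightarrow> a n n = 0" using P4 by simp
  show "\<And>n l. n \<ge> 3 \<Longrightarrow> 1 \<le> l \<Longrightarrow> l \<le> n - 1 \<Longrightarrow> a n l = 2 * a (n - 1) l + (\<Sum>j = 1..l - 1. a (n - 1) j)"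
    using P5 by simp
qed

lemma Rec_bound:
  assumes "Rec a" "n \<ge> 1"
  shows "a n l \<le> 3 ^ n * 2 ^ l"
  using assms(2)
proof (induction n arbitrary: l rule: less_induct)
  case (less n)
  note R = RecD[OF assms(1)]
  consider "l = 0 \<or> l > n" | "l = n" "n \<ge> 2" | "n = 1" "l = 1" | "n = 2" "l = 1" | "n \<ge> 3" "1 \<le> l" "l \<le> n - 1"
    using less.prems by linarith
  then show ?case
  proof cases
    case 1 then show ?thesis using R(1)[OF less.prems] by simp
  next
    case 2 then show ?thesis using R(4)[of n] by simp
  next
    case 3 then show ?thesis using R(2) by simp
  next
    case 4 then show ?thesis using R(3) by simp
  next
    case 5
    have r: "a n l = 2 * a (n - 1) l + (\<Sum>j = 1..l - 1. a (n - 1) j)"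
      using R(5) 5 by blast
    have ih: "\<And>j. a (n - 1) j \<le> 3 ^ (n - 1) * 2 ^ j" using less.IH[of "n - 1"] 5 by simp
    have "(\<Sum>j = 1..l - 1. a (n - 1) j) \<le> (\<Sum>j = 1..l - 1. 3 ^ (n - 1) * 2 ^ j)"
      by (rule sum_mono) (rule ih)
    also have "\<dots> = 3 ^ (n - 1) * (\<Sum>j = 1..l - 1. 2 ^ j)" by (simp add: sum_distrib_left)
    also have "\<dots> \<le> 3 ^ (n - 1) * 2 ^ l" using geom2[of l] by simp
    finally have s: "(\<Sum>j = 1..l - 1. a (n - 1) j) \<le> 3 ^ (n - 1) * 2 ^ l" .
    have "a n l \<le> 3 * (3 ^ (n - 1) * 2 ^ l)" using r s ih[of l] by linarith
    also have "3 * (3 ^ (n - 1) * (2::nat) ^ l) = 3 ^ n * 2 ^ l"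
      using 5 by (metis (no_types) Suc_diff_1 less_le_trans mult.assoc power_Suc zero_less_numeral)
    finally show ?thesis .
  qed
qed

definition G :: "(nat \<Rightarrow> nat \<Rightarrow> nat) \<Rightarrow> nat \<Rightarrow> real \<Rightarrow> real" where
  "G a n u = (\<Sum>l = 1..n. real (a n l) * u ^ l)"

definition F :: "(nat \<Rightarrow> nat \<Rightarrow> nat) \<Rightarrow> real \<Rightarrow> real \<Rightarrow> real" where
  "F a x u = (\<Sum>n. G a n u * x ^ n)"

lemma G_bound:
  assumes "Rec a" "\<bar>u\<bar> \<le> 2"
  shows "\<bar>G a n u\<bar> \<le> 24 ^ n"
proof -
  have "\<bar>G a n u\<bar> \<le> (\<Sum>l = 1..n. \<bar>real (a n l) * u ^ l\<bar>)" unfolding G_def by (rule sum_abs)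
  also have "\<dots> \<le> (\<Sum>l = 1..n. 12 ^ n)"
  proof (rule sum_mono)
    fix l assume l: "l \<in> {1..n}"
    then have n1: "n \<ge> 1" by simp
    have "a n l \<le> 3 ^ n * 2 ^ l" using Rec_bound[OF assms(1) n1, of l] .
    then have "real (a n l) \<le> real (3 ^ n * 2 ^ l)" by (rule of_nat_mono)
    then have A: "real (a n l) \<le> 3 ^ n * 2 ^ l" by simp
    have B: "\<bar>u ^ l\<bar> \<le> 2 ^ l" using assms(2) by (simp add: power_abs power_mono)
    have "\<bar>real (a n l) * u ^ l\<bar> = real (a n l) * \<bar>u ^ l\<bar>" by (simp add: abs_mult)
    also have "\<dots> \<le> (3 ^ n * 2 ^ l) * 2 ^ l" using A B by (simp add: mult_mono)
    also have "(3::real) ^ n * 2 ^ l * 2 ^ l \<le> 3 ^ n * 2 ^ n * 2 ^ n"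
    proof -
      have "(2::real) ^ l \<le> 2 ^ n" using l by (simp add: power_increasing)
      then show ?thesis by (simp add: mult_mono)
    qed
    also have "\<dots> = 12 ^ n" by (simp add: power_mult_distrib[symmetric])
    finally show "\<bar>real (a n l) * u ^ l\<bar> \<le> 12 ^ n" .
  qed
  also have "\<dots> = real n * 12 ^ n" by simp
  also have "\<dots> \<le> 2 ^ n * 12 ^ n"
  proof -
    have "n \<le> 2 ^ n" using less_exp[of n] by simp
    then have "real n \<le> real (2 ^ n)" by (rule of_nat_mono)
    then have "real n \<le> 2 ^ n" by simp
    then show ?thesis by (simp add: mult_right_mono)
  qed
  also have "\<dots> = 24 ^ n" by (simp add: power_mult_distrib[symmetric])
  finally show ?thesis .
qed

lemma summable_G:
  assumes "Rec a" "\<bar>u\<bar> \<le> 2" "\<bar>x\<bar> < 1/48"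
  shows "summable (\<lambda>n. G a n u * x ^ n)"
proof (rule summable_comparison_test)
  show "\<exists>N. \<forall>n\<ge>N. norm (G a n u * x ^ n) \<le> (1/2) ^ n"
  proof (intro exI allI impI)
    fix n :: nat
    have "norm (G a n u * x ^ n) = \<bar>G a n u\<bar> * \<bar>x\<bar> ^ n" by (simp add: abs_mult power_abs)
    also have "\<dots> \<le> 24 ^ n * (1/48) ^ n"
      using assms by (intro mult_mono G_bound power_mono) auto
    also have "\<dots> = (1/2) ^ n" by (simp add: power_mult_distrib[symmetric])
    finally show "norm (G a n u * x ^ n) \<le> (1/2) ^ n" .
  qed
  show "summable (\<lambda>n. (1/2::real) ^ n)" by simp
qed

lemma tele:
  fixes u :: real
  shows "(1 - u) * (\<Sum>l = 1..N. real (\<Sum>j = 1..l - 1. b j) * u ^ l)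
       = (\<Sum>j = 1..N. real (b j) * (u ^ (j + 1) - u ^ (N + 1)))"
proof (induction N)
  case 0 then show ?case by simp
next
  case (Suc N)
  have c: "(\<Sum>j = 1..Suc N - 1. b j) = (\<Sum>j = 1..N. b j)" by simp
  have "(1 - u) * (\<Sum>l = 1..Suc N. real (\<Sum>j = 1..l - 1. b j) * u ^ l)
      = (1 - u) * (\<Sum>l = 1..N. real (\<Sum>j = 1..l - 1. b j) * u ^ l)
        + (1 - u) * real (\<Sum>j = 1..N. b j) * u ^ Suc N"
    by (simp add: algebra_simps)
  also have "\<dots> = (\<Sum>j = 1..N. real (b j) * (u ^ (j + 1) - u ^ (N + 1)))
        + (\<Sum>j = 1..N. real (b j) * (u ^ (N + 1) - u ^ (N + 2)))"
  proof -
    have "(1 - u) * real (\<Sum>j = 1..N. b j) * u ^ Suc N = (\<Sum>j = 1..N. real (b j) * ((1 - u) * u ^ Suc N))"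
      unfolding of_nat_sum sum_distrib_left sum_distrib_right by (rule sum.cong) (simp_all add: algebra_simps)
    also have "\<dots> = (\<Sum>j = 1..N. real (b j) * (u ^ (N + 1) - u ^ (N + 2)))"
      by (simp add: algebra_simps)
    finally show ?thesis using Suc.IH by simp
  qed
  also have "\<dots> = (\<Sum>j = 1..N. real (b j) * (u ^ (j + 1) - u ^ (N + 2)))"
    by (simp add: sum.distrib[symmetric] algebra_simps)
  also have "\<dots> = (\<Sum>j = 1..Suc N. real (b j) * (u ^ (j + 1) - u ^ (Suc N + 1)))"
    by simp
  finally show ?case .
qed

lemma G_row:
  assumes "Rec a" "n \<ge> 3"
  shows "(1 - u) * G a n u = (2 - u) * G a (n - 1) u - u ^ n * G a (n - 1) 1"
proof -
  note R = RecD[OF assms(1)]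
  obtain m where m: "n = Suc m" using assms(2) by (cases n) auto
  have m2: "m \<ge> 2" using assms(2) m by simp
  have "G a n u = (\<Sum>l = 1..m. real (a n l) * u ^ l) + real (a n n) * u ^ n"
    unfolding G_def using m by simp
  also have "a n n = 0" using R(4) assms(2) by simp
  finally have g1: "G a n u = (\<Sum>l = 1..m. real (a n l) * u ^ l)" by simp
  also have "\<dots> = (\<Sum>l = 1..m. (2 * real (a m l) + real (\<Sum>j = 1..l - 1. a m j)) * u ^ l)"
  proof (rule sum.cong)
    fix l assume "l \<in> {1..m}"
    then have "a n l = 2 * a m l + (\<Sum>j = 1..l - 1. a m j)" using R(5)[of n l] assms(2) m by simp
    then show "real (a n l) * u ^ l = (2 * real (a m l) + real (\<Sum>j = 1..l - 1. a m j)) * u ^ l"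
      by simp
  qed simp
  also have "\<dots> = 2 * G a m u + (\<Sum>l = 1..m. real (\<Sum>j = 1..l - 1. a m j) * u ^ l)"
    unfolding G_def by (simp add: algebra_simps sum.distrib sum_distrib_left)
  finally have g2: "G a n u = 2 * G a m u + (\<Sum>l = 1..m. real (\<Sum>j = 1..l - 1. a m j) * u ^ l)" .
  have "(1 - u) * G a n u = 2 * (1 - u) * G a m u + (\<Sum>j = 1..m. real (a m j) * (u ^ (j + 1) - u ^ (m + 1)))"
    unfolding g2 using tele[where u=u and N=m and b="a m"] by (simp add: algebra_simps)
  also have "(\<Sum>j = 1..m. real (a m j) * (u ^ (j + 1) - u ^ (m + 1))) = u * G a m u - u ^ n * G a m 1"
    unfolding G_def using m by (simp add: algebra_simps sum_distrib_left sum_subtractf)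
  finally show ?thesis using m by (simp add: algebra_simps)
qed

lemma G_small:
  assumes "Rec a"
  shows "G a 0 v = 0" "G a 1 v = v" "G a 2 v = v"
proof -
  note R = RecD[OF assms]
  show "G a 0 v = 0" unfolding G_def by simp
  show "G a 1 v = v" unfolding G_def using R(2) by simp
  have "{1..2::nat} = {1,2}" by auto
  then show "G a 2 v = v" unfolding G_def using R(3) R(4)[of 2] by simp
qed

lemma FE:
  assumes "Rec a" "\<bar>x\<bar> < 1/96" "\<bar>u\<bar> \<le> 2"
  shows "F a x u * ((1 - u) - (2 - u) * x) = (1 - u) * u * x * (1 - x) - u * x * F a (u * x) 1"
proof -
  define s where "s n = G a n u * x ^ n" for n
  define t where "t n = G a n 1 * (u * x) ^ n" for n
  have ss: "summable s" unfolding s_def using summable_G[OF assms(1) assms(3)] assms(2) by simp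
  have "\<bar>u * x\<bar> < 1/48"
  proof -
    have "\<bar>u * x\<bar> = \<bar>u\<bar> * \<bar>x\<bar>" by (simp add: abs_mult)
    also have "\<dots> \<le> 2 * \<bar>x\<bar>" using assms(3) by (simp add: mult_right_mono)
    finally show ?thesis using assms(2) by simp
  qed
  then have st: "summable t" unfolding t_def using summable_G[OF assms(1), of 1] by simp
  define S where "S = suminf s"
  define T where "T = suminf t"
  have SF: "S = F a x u" unfolding S_def s_def F_def by simp
  have TF: "T = F a (u * x) 1" unfolding T_def t_def F_def by simp
  have s3: "(\<lambda>i. s (i + 3)) sums (S - (\<Sum>i<3. s i))"
    using sums_split_initial_segment[OF summable_sums[OF ss]] unfolding S_def .
  have s2: "(\<lambda>i. s (i + 2)) sums (S - (\<Sum>i<2. s i))"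
    using sums_split_initial_segment[OF summable_sums[OF ss]] unfolding S_def .
  have t2: "(\<lambda>i. t (i + 2)) sums (T - (\<Sum>i<2. t i))"
    using sums_split_initial_segment[OF summable_sums[OF st]] unfolding T_def .
  have L: "(\<lambda>i. (1 - u) * s (i + 3)) sums ((1 - u) * (S - (\<Sum>i<3. s i)))"
    by (rule sums_mult[OF s3])
  have R: "(\<lambda>i. (2 - u) * x * s (i + 2) - u * x * t (i + 2)) sums
      ((2 - u) * x * (S - (\<Sum>i<2. s i)) - u * x * (T - (\<Sum>i<2. t i)))"
    by (rule sums_diff[OF sums_mult[OF s2] sums_mult[OF t2]])
  have eq: "(1 - u) * s (i + 3) = (2 - u) * x * s (i + 2) - u * x * t (i + 2)" for i
  proof -
    have "(1 - u) * G a (i + 3) u = (2 - u) * G a (i + 2) u - u ^ (i + 3) * G a (i + 2) 1"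
      using G_row[OF assms(1), of "i + 3" u] by simp
    note row = this
    have xe: "x ^ (i + 3) = x * x ^ (i + 2)" by (simp add: numeral_3_eq_3 numeral_2_eq_2)
    have "(1 - u) * s (i + 3) = x * x ^ (i + 2) * ((1 - u) * G a (i + 3) u)"
      unfolding s_def xe by (simp add: algebra_simps)
    also have "\<dots> = x * x ^ (i + 2) * ((2 - u) * G a (i + 2) u - u * u ^ (i + 2) * G a (i + 2) 1)"
      using row by (simp add: numeral_3_eq_3 numeral_2_eq_2)
    also have "\<dots> = (2 - u) * x * s (i + 2) - u * x * t (i + 2)"
      unfolding s_def t_def by (simp add: algebra_simps power_mult_distrib)
    finally show ?thesis .
  qed
  have "(1 - u) * (S - (\<Sum>i<3. s i)) = (2 - u) * x * (S - (\<Sum>i<2. s i)) - u * x * (T - (\<Sum>i<2. t i))"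
    using sums_unique2[OF L] R unfolding eq by blast
  moreover have "(\<Sum>i<3. s i) = u * x + u * x^2" "(\<Sum>i<2. s i) = u * x" "(\<Sum>i<2. t i) = u * x"
    unfolding s_def t_def using G_small[OF assms(1)] by (simp_all add: numeral_3_eq_3 numeral_2_eq_2 power2_eq_square)
  ultimately have "(1 - u) * (S - (u * x + u * x^2)) = (2 - u) * x * (S - u * x) - u * x * (T - u * x)"
    by simp
  then have "S * ((1 - u) - (2 - u) * x) = (1 - u) * u * x * (1 - x) - u * x * T"
    by (simp add: algebra_simps power2_eq_square)
  then show ?thesis using SF TF by simp
qed

lemma H_closed:
  assumes "Rec a" "\<bar>y\<bar> \<le> 1/200"
  shows "F a y 1 = (1 + y - sqrt (1 - 6 * y + y\<^sup>2)) / 4"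
proof (cases "y = 0")
  case True
  have "F a 0 1 = G a 0 1" unfolding F_def by (rule powser_zero)
  then show ?thesis using True G_small[OF assms(1)] by simp
next
  case False
  define d where "d = 1 - 6 * y + y\<^sup>2"
  define s where "s = sqrt d"
  have yy: "y\<^sup>2 \<le> 1/40000"
  proof -
    have "\<bar>y\<bar> * \<bar>y\<bar> \<le> (1/200) * (1/200)" using assms(2) by (intro mult_mono) auto
    then show ?thesis by (simp add: power2_eq_square abs_mult_self_eq)
  qed
  have y6: "\<bar>6 * y\<bar> \<le> 6/200" using assms(2) by simp
  have d1: "d \<le> (1035/1000)\<^sup>2" unfolding d_def using yy y6 by (simp add: power2_eq_square)
  have y6': "6 * y \<le> 6/200" using y6 by (simp add: abs_le_iff)
  have y0: "0 \<le> y * y" by simp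
  have d2: "(965/1000)\<^sup>2 \<le> d"
  proof -
    have "(965/1000::real)\<^sup>2 = 931225/1000000" by (simp add: power2_eq_square)
    then show ?thesis unfolding d_def power2_eq_square using y6' y0 by linarith
  qed
  have s1: "s \<le> 1035/1000"
  proof -
    have "sqrt d \<le> sqrt ((1035/1000)\<^sup>2)" using d1 by (rule real_sqrt_le_mono)
    then show ?thesis unfolding s_def by simp
  qed
  have s2: "965/1000 \<le> s"
  proof -
    have "sqrt ((965/1000)\<^sup>2) \<le> sqrt d" using d2 by (rule real_sqrt_le_mono)
    then show ?thesis unfolding s_def by simp
  qed
  have d0: "d \<ge> 0" using d2 by (smt (verit) zero_le_power2)
  have ssq: "s\<^sup>2 = d" unfolding s_def using d0 by simp
  define x where "x = (1 + y - s) / 4"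
  have "-1/200 \<le> y" "y \<le> 1/200" using assms(2) by (simp_all add: abs_le_iff)
  then have "\<bar>1 + y - s\<bar> \<le> 4/100" using s1 s2 unfolding abs_le_iff by auto
  then have xb: "\<bar>x\<bar> \<le> 1/100" unfolding x_def by simp
  have quad: "2 * x\<^sup>2 - (1 + y) * x + y = 0"
    unfolding x_def using ssq unfolding d_def by (simp add: power2_eq_square field_simps)
  define u where "u = (1 - 2 * x) / (1 - x)"
  have x1: "1 - x > 0" using xb by (simp add: abs_le_iff)
  have u0: "u \<ge> 0" unfolding u_def using xb x1 by (simp add: abs_le_iff)
  have u2: "u \<le> 2" unfolding u_def using x1 by (simp add: field_simps)
  have ub: "\<bar>u\<bar> \<le> 2" using u0 u2 by simp
  have uxy: "u * x = y"
  proof -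
    have "u * x * (1 - x) = (1 - 2 * x) * x" unfolding u_def using x1 by (simp add: field_simps)
    also have "\<dots> = y * (1 - x)" using quad by (simp add: algebra_simps power2_eq_square)
    finally show ?thesis using x1 by simp
  qed
  have K0: "(1 - u) - (2 - u) * x = 0" unfolding u_def using x1 by (simp add: field_simps)
  have "F a x u * ((1 - u) - (2 - u) * x) = (1 - u) * u * x * (1 - x) - u * x * F a (u * x) 1"
    by (rule FE[OF assms(1)]) (use xb ub in auto)
  then have "0 = (1 - u) * (u * x) * (1 - x) - (u * x) * F a (u * x) 1" unfolding K0 by (simp add: mult.assoc)
  then have "0 = (1 - u) * y * (1 - x) - y * F a y 1" unfolding uxy .
  then have "y * ((1 - u) * (1 - x) - F a y 1) = 0" by (simp add: algebra_simps)
  then have "(1 - u) * (1 - x) - F a y 1 = 0" using False by simp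
  then have "F a y 1 = (1 - u) * (1 - x)" by simp
  also have "\<dots> = x" unfolding u_def using x1 by (simp add: field_simps)
  finally show ?thesis unfolding x_def s_def d_def .
qed

lemma Rec_gf:
  assumes "Rec a"
  shows "\<exists>\<epsilon> > 0. \<forall>x u :: real. \<bar>x\<bar> < \<epsilon> \<and> \<bar>u\<bar> < \<epsilon> \<longrightarrow>
        (\<lambda>n. \<Sum>l = 1..n. real (a n l) * u ^ l * x ^ n) sums
        (u * x * (4 * u - 3 + 4 * x - 3 * u * x - sqrt (1 - 6 * u * x + u\<^sup>2 * x\<^sup>2))
          / (4 * (u - 1 - u * x + 2 * x)))"
proof (intro exI[of _ "1/200"] conjI allI impI)
  fix x u :: real
  assume xu: "\<bar>x\<bar> < 1/200 \<and> \<bar>u\<bar> < 1/200"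
  have xb: "\<bar>x\<bar> < 1/96" and ub: "\<bar>u\<bar> \<le> 2" using xu by auto
  have fun_eq: "(\<lambda>n. \<Sum>l = 1..n. real (a n l) * u ^ l * x ^ n) = (\<lambda>n. G a n u * x ^ n)"
    unfolding G_def by (simp add: sum_distrib_right)
  have sm: "summable (\<lambda>n. G a n u * x ^ n)" using summable_G[OF assms ub] xb by simp
  have yb: "\<bar>u * x\<bar> \<le> 1/200"
  proof -
    have "\<bar>u * x\<bar> = \<bar>u\<bar> * \<bar>x\<bar>" by (simp add: abs_mult)
    also have "\<dots> \<le> 1 * (1/200)" using xu by (intro mult_mono) auto
    finally show ?thesis by simp
  qed
  have H: "F a (u * x) 1 = (1 + u * x - sqrt (1 - 6 * (u * x) + (u * x)\<^sup>2)) / 4"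
    using H_closed[OF assms yb] .
  have fe: "F a x u * ((1 - u) - (2 - u) * x) = (1 - u) * u * x * (1 - x) - u * x * F a (u * x) 1"
    using FE[OF assms xb ub] .
  have Kpos: "(1 - u) - (2 - u) * x > 0"
  proof -
    have "\<bar>(2 - u) * x\<bar> \<le> 3 * (1/200)"
    proof -
      have "\<bar>(2 - u) * x\<bar> = \<bar>2 - u\<bar> * \<bar>x\<bar>" by (simp add: abs_mult)
      also have "\<dots> \<le> 3 * (1/200)" using xu by (intro mult_mono) auto
      finally show ?thesis .
    qed
    then show ?thesis using xu by (simp add: abs_le_iff abs_less_iff) linarith
  qed
  have Fv: "F a x u = ((1 - u) * u * x * (1 - x) - u * x * F a (u * x) 1) / ((1 - u) - (2 - u) * x)"
    using fe Kpos by (simp add: field_simps)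
  have pe: "(u * x)\<^sup>2 = u\<^sup>2 * x\<^sup>2" by (simp add: power_mult_distrib)
  have "F a x u = u * x * (4 * u - 3 + 4 * x - 3 * u * x - sqrt (1 - 6 * u * x + u\<^sup>2 * x\<^sup>2))
          / (4 * (u - 1 - u * x + 2 * x))"
    unfolding Fv H pe using Kpos by (simp add: field_simps)
  moreover have "(\<lambda>n. G a n u * x ^ n) sums F a x u" unfolding F_def using sm by (rule summable_sums)
  ultimately show "(\<lambda>n. \<Sum>l = 1..n. real (a n l) * u ^ l * x ^ n) sums
        (u * x * (4 * u - 3 + 4 * x - 3 * u * x - sqrt (1 - 6 * u * x + u\<^sup>2 * x\<^sup>2))
          / (4 * (u - 1 - u * x + 2 * x)))" unfolding fun_eq by simp
qed simp

definition shiftdn :: "nat \<Rightarrow> nat \<Rightarrow> nat" where "shiftdn v w = (if w > v then w - 1 else w)"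
definition shiftup :: "nat \<Rightarrow> nat \<Rightarrow> nat" where "shiftup v w = (if w \<ge> v then w + 1 else w)"
definition posdel :: "nat \<Rightarrow> nat \<Rightarrow> nat" where "posdel q i = (if i < q then i else Suc i)"

definition del :: "nat \<Rightarrow> nat \<Rightarrow> (nat \<Rightarrow> nat) \<Rightarrow> nat \<Rightarrow> nat" where
  "del n q \<sigma> = (\<lambda>i. if i \<in> {1..n-1} then shiftdn (\<sigma> q) (\<sigma> (posdel q i)) else i)"

definition ins :: "nat \<Rightarrow> nat \<Rightarrow> nat \<Rightarrow> (nat \<Rightarrow> nat) \<Rightarrow> nat \<Rightarrow> nat" where
  "ins n q v \<tau> = (\<lambda>i. if i \<in> {1..n} then (if i < q then shiftup v (\<tau> i) else if i = q then v
                       else shiftup v (\<tau> (i - 1))) else i)"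

lemma shiftdn_less: "a \<noteq> v \<Longrightarrow> b \<noteq> v \<Longrightarrow> shiftdn v a < shiftdn v b \<longleftrightarrow> a < b"
  unfolding shiftdn_def by auto

lemma shiftdn_inj: "a \<noteq> v \<Longrightarrow> b \<noteq> v \<Longrightarrow> shiftdn v a = shiftdn v b \<longleftrightarrow> a = b"
  unfolding shiftdn_def by auto

lemma shiftup_less: "shiftup v a < shiftup v b \<longleftrightarrow> a < b"
  unfolding shiftup_def by auto

lemma shiftup_inj: "shiftup v a = shiftup v b \<longleftrightarrow> a = b"
  unfolding shiftup_def by auto

lemma shiftup_neq: "shiftup v a \<noteq> v"
  unfolding shiftup_def by auto

lemma shiftdn_shiftup [simp]: "shiftdn v (shiftup v w) = w"
  unfolding shiftup_def shiftdn_def by auto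

lemma shiftup_shiftdn: "w \<noteq> v \<Longrightarrow> shiftup v (shiftdn v w) = w"
  unfolding shiftup_def shiftdn_def by auto

lemma posdel_less: "posdel q i < posdel q j \<longleftrightarrow> i < j"
  unfolding posdel_def by auto

lemma posdel_neq: "posdel q i \<noteq> q"
  unfolding posdel_def by auto

lemma perm_range: "\<sigma> permutes {1..n} \<Longrightarrow> i \<in> {1..n} \<Longrightarrow> \<sigma> i \<in> {1..n}"
  by (rule iffD2[OF permutes_in_image])

lemma perm_out: "\<sigma> permutes {1..n} \<Longrightarrow> i \<notin> {1..n} \<Longrightarrow> \<sigma> i = i"
  by (rule permutes_not_in)

lemma perm_inj: "\<sigma> permutes S \<Longrightarrow> \<sigma> i = \<sigma> j \<longleftrightarrow> i = j"
  using permutes_inj[of \<sigma> S] unfolding inj_def by blast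

lemma del_out: "i \<notin> {1..n-1} \<Longrightarrow> del n q \<sigma> i = i"
  unfolding del_def by (simp del: atLeastAtMost_iff)

lemma del_in: "i \<in> {1..n-1} \<Longrightarrow> del n q \<sigma> i = shiftdn (\<sigma> q) (\<sigma> (posdel q i))"
  unfolding del_def by (simp del: atLeastAtMost_iff)

lemma ins_out: "i \<notin> {1..n} \<Longrightarrow> ins n q v \<tau> i = i"
  unfolding ins_def by (simp del: atLeastAtMost_iff)

lemma ins_lt: "i \<in> {1..n} \<Longrightarrow> i < q \<Longrightarrow> ins n q v \<tau> i = shiftup v (\<tau> i)"
  unfolding ins_def by (simp del: atLeastAtMost_iff)

lemma ins_eq: "q \<in> {1..n} \<Longrightarrow> ins n q v \<tau> q = v"
  unfolding ins_def by (simp del: atLeastAtMost_iff)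

lemma ins_gt: "i \<in> {1..n} \<Longrightarrow> i > q \<Longrightarrow> ins n q v \<tau> i = shiftup v (\<tau> (i - 1))"
  unfolding ins_def by (simp del: atLeastAtMost_iff)

lemma del_permutes:
  assumes s: "\<sigma> permutes {1..n}" and q: "q \<in> {1..n}"
  shows "del n q \<sigma> permutes {1..n-1}"
proof (rule inj_imp_permutes)
  show "finite {1..n-1}" by simp
  show "\<And>i. i \<notin> {1..n-1} \<Longrightarrow> del n q \<sigma> i = i" by (rule del_out)
  show "\<And>i. i \<in> {1..n-1} \<Longrightarrow> del n q \<sigma> i \<in> {1..n-1}"
  proof -
    fix i assume i: "i \<in> {1..n-1}"
    have pi: "posdel q i \<in> {1..n}" using i unfolding posdel_def by auto
    have w: "\<sigma> (posdel q i) \<in> {1..n}" using perm_range[OF s pi] .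
    have ne: "\<sigma> (posdel q i) \<noteq> \<sigma> q" using perm_inj[OF s] posdel_neq by simp
    have v: "\<sigma> q \<in> {1..n}" using perm_range[OF s q] .
    show "del n q \<sigma> i \<in> {1..n-1}" unfolding del_def using i w ne v
      by (auto simp: shiftdn_def)
  qed
  show "inj_on (del n q \<sigma>) {1..n-1}"
  proof (rule inj_onI)
    fix i j assume i: "i \<in> {1..n-1}" and j: "j \<in> {1..n-1}" and e: "del n q \<sigma> i = del n q \<sigma> j"
    have ne1: "\<sigma> (posdel q i) \<noteq> \<sigma> q" "\<sigma> (posdel q j) \<noteq> \<sigma> q" using perm_inj[OF s] posdel_neq by simp_all
    from e have "shiftdn (\<sigma> q) (\<sigma> (posdel q i)) = shiftdn (\<sigma> q) (\<sigma> (posdel q j))"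
      unfolding del_def using i j by simp
    then have "\<sigma> (posdel q i) = \<sigma> (posdel q j)" using shiftdn_inj[OF ne1] by simp
    then have "posdel q i = posdel q j" using perm_inj[OF s] by simp
    then show "i = j" unfolding posdel_def by (auto split: if_splits)
  qed
qed

lemma ins_permutes:
  assumes t: "\<tau> permutes {1..n-1}" and q: "q \<in> {1..n}" and v: "v \<in> {1..n}"
  shows "ins n q v \<tau> permutes {1..n}"
proof (rule inj_imp_permutes)
  show "finite {1..n}" by simp
  show "\<And>i. i \<notin> {1..n} \<Longrightarrow> ins n q v \<tau> i = i" by (rule ins_out)
  show "\<And>i. i \<in> {1..n} \<Longrightarrow> ins n q v \<tau> i \<in> {1..n}"
  proof -
    fix i assume i: "i \<in> {1..n}"
    show "ins n q v \<tau> i \<in> {1..n}"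
    proof (cases "i < q")
      case True
      then have "i \<in> {1..n-1}" using i q by auto
      then have "\<tau> i \<in> {1..n-1}" using perm_range[OF t] by blast
      then show ?thesis unfolding ins_def using i True by (auto simp: shiftup_def)
    next
      case False
      show ?thesis
      proof (cases "i = q")
        case True then show ?thesis unfolding ins_def using i v by simp
      next
        case False': False
        then have "i - 1 \<in> {1..n-1}" using i q False by auto
        then have "\<tau> (i - 1) \<in> {1..n-1}" using perm_range[OF t] by blast
        then show ?thesis unfolding ins_def using i False False' by (auto simp: shiftup_def)
      qed
    qed
  qed
  show "inj_on (ins n q v \<tau>) {1..n}"
  proof (rule inj_onI)
    fix i j assume i: "i \<in> {1..n}" and j: "j \<in> {1..n}" and e: "ins n q v \<tau> i = ins n q v \<tau> j"
    have ti: "\<And>a b. \<tau> a = \<tau> b \<longleftrightarrow> a = b" using perm_inj[OF t] .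
    have nv: "\<And>a. shiftup v a \<noteq> v" "\<And>a. v \<noteq> shiftup v a" using shiftup_neq by (auto simp: eq_commute)
    consider "i < q" "j < q" | "i < q" "j = q" | "i < q" "j > q" | "i = q" "j < q" | "i = q" "j = q" | "i = q" "j > q"
      | "i > q" "j < q" | "i > q" "j = q" | "i > q" "j > q" by linarith
    then show "i = j"
    proof cases
      case 1 then show ?thesis using e ins_lt[OF i] ins_lt[OF j] by (simp add: shiftup_inj ti)
    next
      case 2 then show ?thesis using e ins_lt[OF i] ins_eq[OF q] nv by simp
    next
      case 3 then show ?thesis using e ins_lt[OF i] ins_gt[OF j] i j by (simp add: shiftup_inj ti)
    next
      case 4 then show ?thesis using e ins_lt[OF j] ins_eq[OF q] nv by simp
    next
      case 5 then show ?thesis by simp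
    next
      case 6 then show ?thesis using e ins_gt[OF j] ins_eq[OF q] nv by simp
    next
      case 7 then show ?thesis using e ins_gt[OF i] ins_lt[OF j] i j by (simp add: shiftup_inj ti)
    next
      case 8 then show ?thesis using e ins_gt[OF i] ins_eq[OF q] nv by simp
    next
      case 9 then show ?thesis using e ins_gt[OF i] ins_gt[OF j] i j by (simp add: shiftup_inj ti)
    qed
  qed
qed

lemma ins_del:
  assumes s: "\<sigma> permutes {1..n}" and q: "q \<in> {1..n}"
  shows "ins n q (\<sigma> q) (del n q \<sigma>) = \<sigma>"
proof
  fix i
  have ne: "\<And>k. k \<noteq> q \<Longrightarrow> \<sigma> k \<noteq> \<sigma> q" using perm_inj[OF s] by simp
  show "ins n q (\<sigma> q) (del n q \<sigma>) i = \<sigma> i"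
  proof (cases "i \<in> {1..n}")
    case False then show ?thesis using ins_out[OF False] perm_out[OF s False] by simp
  next
    case True
    consider "i < q" | "i = q" | "i > q" by linarith
    then show ?thesis
    proof cases
      case 1
      then have "i \<in> {1..n-1}" using True q by auto
      then show ?thesis unfolding ins_def del_def posdel_def using True 1 ne[of i]
        by (simp add: shiftup_shiftdn)
    next
      case 2 then show ?thesis unfolding ins_def using True by simp
    next
      case 3
      then have "i - 1 \<in> {1..n-1}" using True q by auto
      moreover have "posdel q (i - 1) = i" unfolding posdel_def using 3 by auto
      ultimately show ?thesis unfolding ins_def del_def using True 3 ne[of i]
        by (simp add: shiftup_shiftdn)
    qed
  qed
qed

lemma del_ins:
  assumes t: "\<tau> permutes {1..n-1}" and q: "q \<in> {1..n}"
  shows "del n q (ins n q v \<tau>) = \<tau>"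
proof
  fix i
  show "del n q (ins n q v \<tau>) i = \<tau> i"
  proof (cases "i \<in> {1..n-1}")
    case False then show ?thesis using del_out[OF False] perm_out[OF t False] by simp
  next
    case True
    have iq: "ins n q v \<tau> q = v" using ins_eq[OF q] .
    show ?thesis
    proof (cases "i < q")
      case True': True
      have "i \<in> {1..n}" using True by auto
      then show ?thesis using del_in[OF True] True' ins_lt iq unfolding posdel_def by simp
    next
      case False
      have "Suc i \<in> {1..n}" using True by auto
      then show ?thesis using del_in[OF True] False ins_gt iq unfolding posdel_def by simp
    qed
  qed
qed

lemma contains_del:
  assumes s: "\<sigma> permutes {1..n}" and q: "q \<in> {1..n}"
    and c: "contains_pattern (n - 1) (del n q \<sigma>) p"
  shows "contains_pattern n \<sigma> p"
proof -
  obtain \<iota> where i1: "\<forall>i < length p. \<iota> i \<in> {1..n-1}"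
    and i2: "\<forall>i j. i < j \<longrightarrow> j < length p \<longrightarrow> \<iota> i < \<iota> j"
    and i3: "\<forall>i < length p. \<forall>j < length p. del n q \<sigma> (\<iota> i) < del n q \<sigma> (\<iota> j) \<longleftrightarrow> p ! i < p ! j"
    using c unfolding contains_pattern_def by blast
  define \<kappa> where "\<kappa> i = posdel q (\<iota> i)" for i
  show ?thesis unfolding contains_pattern_def
  proof (intro exI[of _ \<kappa>] conjI allI impI)
    fix i assume "i < length p"
    then show "\<kappa> i \<in> {1..n}" using i1 unfolding \<kappa>_def posdel_def by auto
  next
    fix i j assume "i < j" "j < length p"
    then show "\<kappa> i < \<kappa> j" using i2 unfolding \<kappa>_def by (simp add: posdel_less)
  next
    fix i j assume i: "i < length p" and j: "j < length p"
    have ne: "\<sigma> (\<kappa> i) \<noteq> \<sigma> q" "\<sigma> (\<kappa> j) \<noteq> \<sigma> q" unfolding \<kappa>_def using perm_inj[OF s] posdel_neq by simp_all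
    have "del n q \<sigma> (\<iota> i) = shiftdn (\<sigma> q) (\<sigma> (\<kappa> i))" using del_in i1 i unfolding \<kappa>_def by blast
    moreover have "del n q \<sigma> (\<iota> j) = shiftdn (\<sigma> q) (\<sigma> (\<kappa> j))" using del_in i1 j unfolding \<kappa>_def by blast
    moreover have "del n q \<sigma> (\<iota> i) < del n q \<sigma> (\<iota> j) \<longleftrightarrow> p ! i < p ! j" using i3 i j by blast
    ultimately show "\<sigma> (\<kappa> i) < \<sigma> (\<kappa> j) \<longleftrightarrow> p ! i < p ! j" using shiftdn_less[OF ne] by simp
  qed
qed

lemma contains_del_back:
  assumes s: "\<sigma> permutes {1..n}" and q: "q \<in> {1..n}"
    and i1: "\<forall>i < length p. \<iota> i \<in> {1..n}"
    and i2: "\<forall>i j. i < j \<longrightarrow> j < length p \<longrightarrow> \<iota> i < \<iota> j"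
    and i3: "\<forall>i < length p. \<forall>j < length p. \<sigma> (\<iota> i) < \<sigma> (\<iota> j) \<longleftrightarrow> p ! i < p ! j"
    and nq: "\<forall>i < length p. \<iota> i \<noteq> q"
  shows "contains_pattern (n - 1) (del n q \<sigma>) p"
proof -
  define \<kappa> where "\<kappa> i = (if \<iota> i < q then \<iota> i else \<iota> i - 1)" for i
  have pk: "posdel q (\<kappa> i) = \<iota> i" if "i < length p" for i
    using nq that unfolding \<kappa>_def posdel_def by auto
  have kr: "\<kappa> i \<in> {1..n-1}" if "i < length p" for i
    using nq i1 q that unfolding \<kappa>_def by fastforce
  show ?thesis unfolding contains_pattern_def
  proof (intro exI[of _ \<kappa>] conjI allI impI)
    fix i assume "i < length p"
    then show "\<kappa> i \<in> {1..n-1}" by (rule kr)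
  next
    fix i j assume "i < j" "j < length p"
    then have "posdel q (\<kappa> i) < posdel q (\<kappa> j)" using i2 pk by simp
    then show "\<kappa> i < \<kappa> j" by (simp add: posdel_less)
  next
    fix i j assume i: "i < length p" and j: "j < length p"
    have ne: "\<sigma> (\<iota> i) \<noteq> \<sigma> q" "\<sigma> (\<iota> j) \<noteq> \<sigma> q" using perm_inj[OF s] nq i j by simp_all
    have "del n q \<sigma> (\<kappa> i) = shiftdn (\<sigma> q) (\<sigma> (\<iota> i))" using del_in[OF kr[OF i]] pk[OF i] by simp
    moreover have "del n q \<sigma> (\<kappa> j) = shiftdn (\<sigma> q) (\<sigma> (\<iota> j))" using del_in[OF kr[OF j]] pk[OF j] by simp
    moreover have "\<sigma> (\<iota> i) < \<sigma> (\<iota> j) \<longleftrightarrow> p ! i < p ! j" using i3 i j by blast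
    ultimately show "del n q \<sigma> (\<kappa> i) < del n q \<sigma> (\<kappa> j) \<longleftrightarrow> p ! i < p ! j"
      using shiftdn_less[OF ne] by simp
  qed
qed

definition decomp_at :: "nat \<Rightarrow> (nat \<Rightarrow> nat) \<Rightarrow> nat \<Rightarrow> bool" where
  "decomp_at n \<sigma> m \<longleftrightarrow> 1 \<le> m \<and> m < n \<and> (\<forall>i\<in>{1..m}. \<forall>j\<in>{m+1..n}. \<sigma> j < \<sigma> i)"

lemma card_le_helper:
  assumes "inj_on f A" "f ` A \<subseteq> B" "finite B"
  shows "card A \<le> card B"
  using card_inj_on_le[OF assms] .

lemma skew_dec_iff:
  assumes s: "\<sigma> permutes {1..n}"
  shows "skew_decomposable n \<sigma> \<longleftrightarrow> (\<exists>m. decomp_at n \<sigma> m)"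
proof
  assume "skew_decomposable n \<sigma>"
  then obtain m r \<pi> \<tau> where m: "m \<ge> 1" "r \<ge> 1" "m + r = n" and p: "\<pi> permutes {1..m}" and t: "\<tau> permutes {1..r}"
    and e: "\<sigma> = skew_sum m \<pi> r \<tau>" unfolding skew_decomposable_def by blast
  have "decomp_at n \<sigma> m" unfolding decomp_at_def
  proof (intro conjI ballI)
    show "1 \<le> m" "m < n" using m by auto
    fix i j assume i: "i \<in> {1..m}" and j: "j \<in> {m+1..n}"
    have "\<sigma> i = \<pi> i + r" using e i unfolding skew_sum_def by simp
    moreover have "\<pi> i \<ge> 1" using perm_range[OF p i] by simp
    moreover have "\<sigma> j = \<tau> (j - m)" using e j m unfolding skew_sum_def by auto
    moreover have "j - m \<in> {1..r}" using j m by auto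
    then have "\<tau> (j - m) \<le> r" using perm_range[OF t, of "j - m"] by auto
    ultimately show "\<sigma> j < \<sigma> i" by simp
  qed
  then show "\<exists>m. decomp_at n \<sigma> m" by blast
next
  assume "\<exists>m. decomp_at n \<sigma> m"
  then obtain m where m1: "1 \<le> m" and m2: "m < n" and d: "\<forall>i\<in>{1..m}. \<forall>j\<in>{m+1..n}. \<sigma> j < \<sigma> i"
    unfolding decomp_at_def by blast
  define r where "r = n - m"
  have injs: "inj_on \<sigma> A" for A using permutes_inj[OF s] by (simp add: inj_on_def inj_def)
  have low: "\<sigma> j \<le> r" if j: "j \<in> {m+1..n}" for j
  proof (rule ccontr)
    assume "\<not> \<sigma> j \<le> r"
    then have y: "\<sigma> j > r" by simp
    have "\<sigma> ` {1..m} \<subseteq> {\<sigma> j + 1..n}"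
    proof
      fix z assume "z \<in> \<sigma> ` {1..m}"
      then obtain i where i: "i \<in> {1..m}" "z = \<sigma> i" by blast
      have "\<sigma> i \<in> {1..n}" using perm_range[OF s] i m2 by auto
      moreover have "\<sigma> j < \<sigma> i" using d i(1) j by blast
      ultimately show "z \<in> {\<sigma> j + 1..n}" using i(2) by auto
    qed
    from card_le_helper[OF injs this] have "m \<le> n - \<sigma> j" by simp
    then show False using y r_def m1 m2 by arith
  qed
  have high: "\<sigma> i > r" if i: "i \<in> {1..m}" for i
  proof (rule ccontr)
    assume "\<not> \<sigma> i > r"
    then have y: "\<sigma> i \<le> r" by simp
    have "\<sigma> ` {m+1..n} \<subseteq> {1..<\<sigma> i}"
    proof
      fix z assume "z \<in> \<sigma> ` {m+1..n}"
      then obtain j where j: "j \<in> {m+1..n}" "z = \<sigma> j" by blast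
      have "\<sigma> j \<in> {1..n}" using perm_range[OF s] j m1 by auto
      moreover have "\<sigma> j < \<sigma> i" using d i j(1) by blast
      ultimately show "z \<in> {1..<\<sigma> i}" using j(2) by auto
    qed
    from card_le_helper[OF injs this] have "n - m \<le> \<sigma> i - 1" by simp
    moreover have "\<sigma> i \<ge> 1" using perm_range[OF s] i m2 by fastforce
    ultimately show False using y r_def m1 m2 by arith
  qed
  define \<pi> where "\<pi> i = (if i \<in> {1..m} then \<sigma> i - r else i)" for i
  define \<tau> where "\<tau> j = (if j \<in> {1..r} then \<sigma> (j + m) else j)" for j
  have pp: "\<pi> permutes {1..m}"
  proof (rule inj_imp_permutes)
    show "finite {1..m}" by simp
    show "\<And>i. i \<notin> {1..m} \<Longrightarrow> \<pi> i = i" unfolding \<pi>_def by (simp del: atLeastAtMost_iff)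
    show "\<pi> i \<in> {1..m}" if i: "i \<in> {1..m}" for i
    proof -
      have "\<sigma> i \<in> {1..n}" using perm_range[OF s] i m2 by auto
      then show ?thesis using high[OF i] i unfolding \<pi>_def r_def by auto
    qed
    show "inj_on \<pi> {1..m}"
    proof (rule inj_onI)
      fix i j assume i: "i \<in> {1..m}" and j: "j \<in> {1..m}" and e: "\<pi> i = \<pi> j"
      then have "\<sigma> i = \<sigma> j" using high[OF i] high[OF j] unfolding \<pi>_def by simp
      then show "i = j" using perm_inj[OF s] by simp
    qed
  qed
  have tp: "\<tau> permutes {1..r}"
  proof (rule inj_imp_permutes)
    show "finite {1..r}" by simp
    show "\<And>i. i \<notin> {1..r} \<Longrightarrow> \<tau> i = i" unfolding \<tau>_def by (simp del: atLeastAtMost_iff)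
    show "\<tau> j \<in> {1..r}" if j: "j \<in> {1..r}" for j
    proof -
      have jm: "j + m \<in> {m+1..n}" using j r_def by auto
      have "\<sigma> (j + m) \<in> {1..n}" using perm_range[OF s] jm m1 by auto
      then show ?thesis using low[OF jm] j unfolding \<tau>_def by auto
    qed
    show "inj_on \<tau> {1..r}"
    proof (rule inj_onI)
      fix i j assume i: "i \<in> {1..r}" and j: "j \<in> {1..r}" and e: "\<tau> i = \<tau> j"
      then have "\<sigma> (i + m) = \<sigma> (j + m)" unfolding \<tau>_def by simp
      then show "i = j" using perm_inj[OF s] by simp
    qed
  qed
  have "\<sigma> = skew_sum m \<pi> r \<tau>"
  proof
    fix i
    show "\<sigma> i = skew_sum m \<pi> r \<tau> i"
    proof (cases "i \<in> {1..m}")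
      case True
      then show ?thesis using high[OF True] unfolding skew_sum_def \<pi>_def by simp
    next
      case False
      show ?thesis
      proof (cases "i \<in> {m+1..m+r}")
        case True
        then have "i - m \<in> {1..r}" by auto
        then show ?thesis using True False unfolding skew_sum_def \<tau>_def by auto
      next
        case False': False
        then have "i \<notin> {1..n}" using False r_def m2 by auto
        then show ?thesis using False False' perm_out[OF s] unfolding skew_sum_def by (simp del: atLeastAtMost_iff)
      qed
    qed
  qed
  then show "skew_decomposable n \<sigma>" unfolding skew_decomposable_def
    using m1 m2 pp tp r_def by (intro exI[of _ m] exI[of _ r] exI[of _ \<pi>] exI[of _ \<tau>]) auto
qed

lemma Dpos:
  assumes p: "\<pi> permutes {1..N}" and d: "decomp_at N \<pi> m" and j0: "j0 \<in> {1..N}" and v: "\<pi> j0 = 1"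
  shows "m < j0"
proof (rule ccontr)
  assume "\<not> m < j0"
  then have "j0 \<in> {1..m}" using j0 by auto
  moreover have "N \<in> {m+1..N}" using d unfolding decomp_at_def by auto
  ultimately have "\<pi> N < \<pi> j0" using d unfolding decomp_at_def by blast
  moreover have "\<pi> N \<in> {1..N}" using perm_range[OF p] d unfolding decomp_at_def by auto
  ultimately show False using v by auto
qed

lemma SD:
  assumes s: "\<sigma> permutes {1..n}" and q: "q \<in> {1..n}"
    and d: "decomp_at (n - 1) (del n q \<sigma>) m" and mq: "m < q"
    and small: "\<forall>i\<in>{1..m}. \<sigma> q < \<sigma> i"
  shows "decomp_at n \<sigma> m"
  unfolding decomp_at_def
proof (intro conjI ballI)
  show "1 \<le> m" "m < n" using d unfolding decomp_at_def by auto
  fix i j assume i: "i \<in> {1..m}" and j: "j \<in> {m+1..n}"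
  show "\<sigma> j < \<sigma> i"
  proof (cases "j = q")
    case True then show ?thesis using small i by simp
  next
    case False
    define j' where "j' = (if j < q then j else j - 1)"
    have pj: "posdel q j' = j" unfolding j'_def posdel_def using False j mq by auto
    have j'r: "j' \<in> {m+1..n-1}" unfolding j'_def using False j mq q by auto
    have ir: "i \<in> {1..n-1}" using i d unfolding decomp_at_def by auto
    have pi: "posdel q i = i" unfolding posdel_def using i mq by auto
    have "del n q \<sigma> j' < del n q \<sigma> i" using d i j'r unfolding decomp_at_def by blast
    moreover have "del n q \<sigma> j' = shiftdn (\<sigma> q) (\<sigma> j)" using del_in[of j' n q \<sigma>] j'r pj by auto
    moreover have "del n q \<sigma> i = shiftdn (\<sigma> q) (\<sigma> i)" using del_in[OF ir] pi by simp
    moreover have "\<sigma> j \<noteq> \<sigma> q" "\<sigma> i \<noteq> \<sigma> q" using perm_inj[OF s] False i mq by auto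
    ultimately show ?thesis using shiftdn_less by simp
  qed
qed

lemma SD':
  assumes s: "\<sigma> permutes {1..n}" and q: "q \<in> {1..n}"
    and d: "decomp_at n \<sigma> m" and mq: "m < q" and mn: "m < n - 1"
  shows "decomp_at (n - 1) (del n q \<sigma>) m"
  unfolding decomp_at_def
proof (intro conjI ballI)
  show "1 \<le> m" "m < n - 1" using d mn unfolding decomp_at_def by auto
  fix i j assume i: "i \<in> {1..m}" and j: "j \<in> {m+1..n-1}"
  have ir: "i \<in> {1..n-1}" using i mn by auto
  have pi: "posdel q i = i" unfolding posdel_def using i mq by auto
  have pj: "posdel q j \<in> {m+1..n}" using j unfolding posdel_def by auto
  have "\<sigma> (posdel q j) < \<sigma> i" using d i pj unfolding decomp_at_def by blast
  moreover have "\<sigma> (posdel q j) \<noteq> \<sigma> q" using perm_inj[OF s] posdel_neq by simp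
  moreover have "\<sigma> i \<noteq> \<sigma> q" using perm_inj[OF s] i mq by auto
  ultimately show "del n q \<sigma> j < del n q \<sigma> i"
    using del_in[OF ir] del_in[of j n q \<sigma>] j pi shiftdn_less by auto
qed

lemma forall4: "(\<forall>i<(4::nat). P i) \<longleftrightarrow> P 0 \<and> P 1 \<and> P 2 \<and> P 3"
  by (auto simp: numeral_eq_Suc All_less_Suc)

lemma contains4I:
  assumes "length P = 4" "1 \<le> a" "a < b" "b < c" "c < d" "d \<le> n"
    and cmp: "\<forall>i<4. \<forall>j<4. \<sigma> ([a,b,c,d] ! i) < \<sigma> ([a,b,c,d] ! j) \<longleftrightarrow> P ! i < P ! j"
  shows "contains_pattern n \<sigma> P"
  unfolding contains_pattern_def
proof (intro exI[of _ "\<lambda>k. [a,b,c,d] ! k"] conjI allI impI)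
  fix i assume "i < length P"
  then have "i < 4" using assms(1) by simp
  then show "[a,b,c,d] ! i \<in> {1..n}" using assms(2-6) by (auto simp: numeral_eq_Suc less_Suc_eq)
next
  fix i j :: nat assume "i < j" "j < length P"
  then have "j < 4" "i < j" using assms(1) by auto
  then show "[a,b,c,d] ! i < [a,b,c,d] ! j" using assms(2-6)
    by (auto simp: numeral_eq_Suc less_Suc_eq)
next
  fix i j assume "i < length P" "j < length P"
  then show "\<sigma> ([a,b,c,d] ! i) < \<sigma> ([a,b,c,d] ! j) \<longleftrightarrow> P ! i < P ! j" using cmp assms(1) by simp
qed

lemma excl:
  assumes s: "\<sigma> permutes {1..n}" and l: "\<sigma> l = 1" and p: "\<sigma> p = 2" and lp: "l + 1 < p" and pn: "p < n"
  shows "contains_pattern n \<sigma> [1,3,2,4] \<or> contains_pattern n \<sigma> [1,4,2,3]"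
proof -
  have inj: "\<And>x y. \<sigma> x = \<sigma> y \<longleftrightarrow> x = y" using perm_inj[OF s] .
  have l1: "l \<ge> 1"
  proof (rule ccontr)
    assume "\<not> l \<ge> 1" then have "l = 0" by simp
    then have "\<sigma> l = l" using perm_out[OF s] by simp
    then show False using l `l = 0` by simp
  qed
  define A where "A = \<sigma> (l + 1)"
  define B where "B = \<sigma> n"
  have Ar: "A \<in> {1..n}" unfolding A_def using perm_range[OF s] l1 lp pn by simp
  have Br: "B \<in> {1..n}" unfolding B_def using perm_range[OF s] pn by simp
  have A1: "A \<noteq> 1" "A \<noteq> 2" unfolding A_def using inj[of "l+1" l] inj[of "l+1" p] l p lp by auto
  have B1: "B \<noteq> 1" "B \<noteq> 2" unfolding B_def using inj[of n l] inj[of n p] l p lp pn by auto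
  have AB: "A \<noteq> B" unfolding A_def B_def using inj[of "l+1" n] lp pn by auto
  have vA: "\<sigma> (Suc l) = A" "\<sigma> n = B" unfolding A_def B_def by simp_all
  have A3: "A \<ge> 3" using Ar A1 by auto
  have B3: "B \<ge> 3" using Br B1 by auto
  show ?thesis
  proof (cases "A < B")
    case True
    have "contains_pattern n \<sigma> [1,3,2,4]"
      by (rule contains4I[of _ l "l+1" p n]) (use l1 lp pn l p True A3 B3 in \<open>simp_all add: forall4 vA\<close>)
    then show ?thesis by simp
  next
    case False
    then have "B < A" using AB by simp
    have "contains_pattern n \<sigma> [1,4,2,3]"
      by (rule contains4I[of _ l "l+1" p n]) (use l1 lp pn l p `B < A` A3 B3 in \<open>simp_all add: forall4 vA\<close>)
    then show ?thesis by simp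
  qed
qed

definition patok :: "nat list \<Rightarrow> bool" where
  "patok P \<longleftrightarrow> length P = 4 \<and> P!0 < P!1 \<and> P!0 < P!2 \<and> P!0 < P!3 \<and> P!2 < P!1 \<and> P!2 < P!3"

lemma patok1: "patok [1,3,2,4]" unfolding patok_def by simp
lemma patok2: "patok [1,4,2,3]" unfolding patok_def by simp

lemma A_iff: "\<sigma> \<in> A_sind n l \<longleftrightarrow> \<sigma> permutes {1..n} \<and> \<not> contains_pattern n \<sigma> [1,3,2,4] \<and>
   \<not> contains_pattern n \<sigma> [1,4,2,3] \<and> \<not> (\<exists>m. decomp_at n \<sigma> m) \<and> \<sigma> l = 1"
  unfolding A_sind_def avoids_pattern_def skew_indecomposable_def using skew_dec_iff by blast

lemma A_finite: "finite (A_sind n l)"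
proof (rule finite_subset)
  show "A_sind n l \<subseteq> {\<sigma>. \<sigma> permutes {1..n}}" unfolding A_sind_def by blast
  show "finite {\<sigma>. \<sigma> permutes {1..n}}" by (rule finite_permutations) simp
qed

lemma del_in_A:
  assumes A: "\<sigma> \<in> A_sind n l" and q: "q \<in> {1..n}" and j: "j \<in> {1..n-1}"
    and dj: "del n q \<sigma> j = 1" and jq: "j \<le> q" and sm: "\<forall>i\<in>{1..<j}. \<sigma> q < \<sigma> i"
  shows "del n q \<sigma> \<in> A_sind (n - 1) j"
proof -
  have s: "\<sigma> permutes {1..n}" using A unfolding A_iff by blast
  have tp: "del n q \<sigma> permutes {1..n-1}" using del_permutes[OF s q] .
  have av: "\<not> contains_pattern (n - 1) (del n q \<sigma>) P" if "\<not> contains_pattern n \<sigma> P" for P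
    using contains_del[OF s q] that by blast
  have nd: "\<not> (\<exists>m. decomp_at (n - 1) (del n q \<sigma>) m)"
  proof
    assume "\<exists>m. decomp_at (n - 1) (del n q \<sigma>) m"
    then obtain m where d: "decomp_at (n - 1) (del n q \<sigma>) m" by blast
    have "m < j" using Dpos[OF tp d j dj] .
    then have "decomp_at n \<sigma> m" using SD[OF s q d] jq sm by auto
    then show False using A unfolding A_iff by blast
  qed
  show ?thesis unfolding A_iff using tp av nd dj A unfolding A_iff by blast
qed

lemma ins_in_A:
  assumes t: "\<tau> \<in> A_sind (n - 1) j" and q: "q \<in> {1..n}" and v: "v \<in> {1..n}"
    and l: "l \<in> {1..n}" and sl: "ins n q v \<tau> l = 1" and lq: "l \<le> q" and ln: "l \<le> n - 1"
    and a1: "\<not> contains_pattern n (ins n q v \<tau>) [1,3,2,4]"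
    and a2: "\<not> contains_pattern n (ins n q v \<tau>) [1,4,2,3]"
  shows "ins n q v \<tau> \<in> A_sind n l"
proof -
  have tp: "\<tau> permutes {1..n-1}" using t unfolding A_iff by blast
  have sp: "ins n q v \<tau> permutes {1..n}" using ins_permutes[OF tp q v] .
  have nd: "\<not> (\<exists>m. decomp_at n (ins n q v \<tau>) m)"
  proof
    assume "\<exists>m. decomp_at n (ins n q v \<tau>) m"
    then obtain m where d: "decomp_at n (ins n q v \<tau>) m" by blast
    have "m < l" using Dpos[OF sp d l sl] .
    then have "decomp_at (n - 1) (del n q (ins n q v \<tau>)) m" using SD'[OF sp q d] lq ln by auto
    then have "decomp_at (n - 1) \<tau> m" using del_ins[OF tp q] by simp
    then show False using t unfolding A_iff by blast
  qed
  show ?thesis unfolding A_iff using sp a1 a2 nd sl by blast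
qed

lemma avoid_ins1:
  assumes tp: "\<tau> permutes {1..n-1}" and tj: "\<tau> j = 1" and j: "j \<in> {1..l}" and ln: "l \<le> n - 1"
    and P: "patok P" and tav: "\<not> contains_pattern (n - 1) \<tau> P"
  shows "\<not> contains_pattern n (ins n l 1 \<tau>) P"
proof
  assume c: "contains_pattern n (ins n l 1 \<tau>) P"
  define \<sigma> where "\<sigma> = ins n l 1 \<tau>"
  have lr: "l \<in> {1..n}" using j ln by auto
  have one: "(1::nat) \<in> {1..n}" using lr by auto
  have sp: "\<sigma> permutes {1..n}" unfolding \<sigma>_def using ins_permutes[OF tp lr one] .
  have inj: "\<And>x y. \<sigma> x = \<sigma> y \<longleftrightarrow> x = y" using perm_inj[OF sp] .
  have dl: "del n l \<sigma> = \<tau>" unfolding \<sigma>_def using del_ins[OF tp lr] .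
  have sl: "\<sigma> l = 1" unfolding \<sigma>_def using ins_eq[OF lr] .
  define p0 where "p0 = (if j < l then j else l + 1)"
  have p0r: "p0 \<in> {1..n}" unfolding p0_def using j ln by auto
  have p0l: "p0 \<noteq> l" unfolding p0_def by auto
  have sp0: "\<sigma> p0 = 2"
  proof (cases "j < l")
    case True
    have "j \<in> {1..n}" using j ln by auto
    then show ?thesis unfolding p0_def \<sigma>_def using True ins_lt tj by (simp add: shiftup_def)
  next
    case False
    then have "j = l" using j by auto
    have "l + 1 \<in> {1..n}" using ln lr by auto
    then show ?thesis unfolding p0_def \<sigma>_def using False ins_gt tj `j = l` by (simp add: shiftup_def)
  qed
  have L: "length P = 4" and P01: "P!0 < P!1" and P02: "P!0 < P!2" and P03: "P!0 < P!3" and P21: "P!2 < P!1"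
    using P unfolding patok_def by auto
  obtain \<iota> where i1: "\<forall>i < length P. \<iota> i \<in> {1..n}"
    and i2: "\<forall>i j. i < j \<longrightarrow> j < length P \<longrightarrow> \<iota> i < \<iota> j"
    and i3: "\<forall>i < length P. \<forall>j < length P. \<sigma> (\<iota> i) < \<sigma> (\<iota> j) \<longleftrightarrow> P ! i < P ! j"
    using c unfolding contains_pattern_def \<sigma>_def by blast
  have sr: "\<And>k. k < 4 \<Longrightarrow> \<sigma> (\<iota> k) \<in> {1..n}" using i1 L perm_range[OF sp] by auto
  show False
  proof (cases "\<forall>k < length P. \<iota> k \<noteq> l")
    case True
    then have "contains_pattern (n - 1) (del n l \<sigma>) P" using contains_del_back[OF sp lr i1 i2 i3] by blast
    then show False using tav dl by simp
  next
    case False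
    then obtain k where k: "k < 4" "\<iota> k = l" using L by auto
    have k0: "k = 0"
    proof (rule ccontr)
      assume "k \<noteq> 0"
      then have "P!0 < P!k" using k P01 P02 P03 by (auto simp: numeral_eq_Suc less_Suc_eq)
      then have "\<sigma> (\<iota> 0) < \<sigma> (\<iota> k)" using i3 k L by auto
      then show False using k sl sr[of 0] by auto
    qed
    have i0: "\<iota> 0 = l" using k k0 by simp
    have gt: "\<iota> i > l" if "0 < i" "i < 4" for i using i2 that L i0 by metis
    have ne1: "\<sigma> (\<iota> i) \<noteq> 1" if "0 < i" "i < 4" for i using gt[OF that] inj[of "\<iota> i" l] sl by auto
    have p0i1: "p0 < \<iota> 1"
    proof (cases "j < l")
      case True then show ?thesis unfolding p0_def using gt[of 1] j by auto
    next
      case False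
      then have p0e: "p0 = l + 1" unfolding p0_def by simp
      have "\<iota> 1 \<noteq> l + 1"
      proof
        assume "\<iota> 1 = l + 1"
        then have "\<sigma> (\<iota> 1) = 2" using sp0 p0e by simp
        moreover have "\<sigma> (\<iota> 2) < \<sigma> (\<iota> 1)" using i3 L P21 by auto
        moreover have "\<sigma> (\<iota> 2) \<noteq> 1" using ne1[of 2] by simp
        moreover have "\<sigma> (\<iota> 2) \<ge> 1" using sr[of 2] by simp
        ultimately show False by simp
      qed
      then show ?thesis using gt[of 1] p0e by simp
    qed
    have ge1: "\<iota> 1 \<le> \<iota> i" if "0 < i" "i < 4" for i
    proof (cases "i = 1")
      case True then show ?thesis by simp
    next
      case False
      then have "1 < i" using that by simp
      then have "\<iota> 1 < \<iota> i" using i2 that L by simp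
      then show ?thesis by simp
    qed
    have big: "\<sigma> (\<iota> i) > 2" if "0 < i" "i < 4" for i
    proof -
      have "\<iota> i \<noteq> p0" using ge1[OF that] p0i1 by simp
      then have "\<sigma> (\<iota> i) \<noteq> 2" using inj[of "\<iota> i" p0] sp0 by simp
      then show ?thesis using ne1[OF that] sr[OF that(2)] by auto
    qed
    define \<kappa> where "\<kappa> = \<iota>(0 := p0)"
    have k1: "\<forall>i < length P. \<kappa> i \<in> {1..n}" using i1 p0r unfolding \<kappa>_def by auto
    have k2: "\<forall>i j. i < j \<longrightarrow> j < length P \<longrightarrow> \<kappa> i < \<kappa> j"
    proof (intro allI impI)
      fix i j :: nat assume ij: "i < j" "j < length P"
      show "\<kappa> i < \<kappa> j"
      proof (cases "i = 0")
        case True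
        then show ?thesis unfolding \<kappa>_def using ij p0i1 ge1[of j] L by auto
      next
        case False
        then show ?thesis unfolding \<kappa>_def using ij i2 by auto
      qed
    qed
    have k3: "\<forall>i < length P. \<forall>j < length P. \<sigma> (\<kappa> i) < \<sigma> (\<kappa> j) \<longleftrightarrow> P ! i < P ! j"
    proof (intro allI impI)
      fix i j assume ij: "i < length P" "j < length P"
      have "\<sigma> (\<kappa> i) < \<sigma> (\<kappa> j) \<longleftrightarrow> \<sigma> (\<iota> i) < \<sigma> (\<iota> j)"
        unfolding \<kappa>_def using i0 sl sp0 big[of i] big[of j] ij L by (cases "i = 0"; cases "j = 0") auto
      then show "\<sigma> (\<kappa> i) < \<sigma> (\<kappa> j) \<longleftrightarrow> P ! i < P ! j" using i3 ij by simp
    qed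
    have k4: "\<forall>i < length P. \<kappa> i \<noteq> l" unfolding \<kappa>_def using p0l gt L by auto
    have "contains_pattern (n - 1) (del n l \<sigma>) P" using contains_del_back[OF sp lr k1 k2 k3 k4] .
    then show False using tav dl by simp
  qed
qed

lemma avoid_ins2:
  assumes tp: "\<tau> permutes {1..n-1}" and tl: "\<tau> l = 1" and l: "l \<ge> 1" and ln: "l + 1 < n"
    and P: "patok P" and tav: "\<not> contains_pattern (n - 1) \<tau> P"
  shows "\<not> contains_pattern n (ins n n 2 \<tau>) P"
proof
  assume c: "contains_pattern n (ins n n 2 \<tau>) P"
  define \<sigma> where "\<sigma> = ins n n 2 \<tau>"
  have nr: "n \<in> {1..n}" using ln by auto
  have two: "(2::nat) \<in> {1..n}" using ln by auto
  have sp: "\<sigma> permutes {1..n}" unfolding \<sigma>_def using ins_permutes[OF tp nr two] .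
  have inj: "\<And>x y. \<sigma> x = \<sigma> y \<longleftrightarrow> x = y" using perm_inj[OF sp] .
  have dl: "del n n \<sigma> = \<tau>" unfolding \<sigma>_def using del_ins[OF tp nr] .
  have sn: "\<sigma> n = 2" unfolding \<sigma>_def using ins_eq[OF nr] .
  have L: "length P = 4" and P03: "P!0 < P!3" and P23: "P!2 < P!3"
    using P unfolding patok_def by auto
  obtain \<iota> where i1: "\<forall>i < length P. \<iota> i \<in> {1..n}"
    and i2: "\<forall>i j. i < j \<longrightarrow> j < length P \<longrightarrow> \<iota> i < \<iota> j"
    and i3: "\<forall>i < length P. \<forall>j < length P. \<sigma> (\<iota> i) < \<sigma> (\<iota> j) \<longleftrightarrow> P ! i < P ! j"
    using c unfolding contains_pattern_def \<sigma>_def by blast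
  have sr: "\<And>k. k < 4 \<Longrightarrow> \<sigma> (\<iota> k) \<in> {1..n}" using i1 L perm_range[OF sp] by auto
  show False
  proof (cases "\<forall>k < length P. \<iota> k \<noteq> n")
    case True
    then have "contains_pattern (n - 1) (del n n \<sigma>) P" using contains_del_back[OF sp nr i1 i2 i3] by blast
    then show False using tav dl by simp
  next
    case False
    then obtain k where k: "k < 4" "\<iota> k = n" using L by auto
    have k3: "k = 3"
    proof (rule ccontr)
      assume "k \<noteq> 3"
      then have "k < 3" using k by simp
      then have "\<iota> k < \<iota> 3" using i2 L by auto
      moreover have "\<iota> 3 \<le> n" using i1 L by auto
      ultimately show False using k by simp
    qed
    have s3: "\<sigma> (\<iota> 3) = 2" using k k3 sn by simp
    have "\<sigma> (\<iota> 0) < \<sigma> (\<iota> 3)" using i3 L P03 by simp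
    moreover have "\<sigma> (\<iota> 2) < \<sigma> (\<iota> 3)" using i3 L P23 by simp
    ultimately have "\<sigma> (\<iota> 0) < 2" "\<sigma> (\<iota> 2) < 2" using s3 by simp_all
    then have "\<sigma> (\<iota> 0) = \<sigma> (\<iota> 2)" using sr[of 0] sr[of 2] by auto
    then have "\<iota> 0 = \<iota> 2" using inj by simp
    moreover have "\<iota> 0 < \<iota> 2" using i2 L by auto
    ultimately show False by simp
  qed
qed

lemma A_basic:
  assumes "\<sigma> \<in> A_sind n l"
  shows "\<sigma> permutes {1..n}" "\<sigma> l = 1" "\<And>i. i \<noteq> l \<Longrightarrow> \<sigma> i \<noteq> 1" "\<And>i. i \<in> {1..n} \<Longrightarrow> \<sigma> i \<in> {1..n}"
    "\<And>x y. \<sigma> x = \<sigma> y \<longleftrightarrow> x = y"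
proof -
  show s: "\<sigma> permutes {1..n}" using assms unfolding A_iff by blast
  show l: "\<sigma> l = 1" using assms unfolding A_iff by blast
  show "\<And>x y. \<sigma> x = \<sigma> y \<longleftrightarrow> x = y" using perm_inj[OF s] .
  then show "\<And>i. i \<noteq> l \<Longrightarrow> \<sigma> i \<noteq> 1" using l by metis
  show "\<And>i. i \<in> {1..n} \<Longrightarrow> \<sigma> i \<in> {1..n}" using perm_range[OF s] .
qed

lemma B1_img:
  assumes A: "\<sigma> \<in> A_sind n l" and l1: "1 \<le> l" and ln: "l \<le> n - 1"
    and c: "(\<exists>p<l. \<sigma> p = 2) \<or> \<sigma> (l + 1) = 2"
  shows "del n l \<sigma> \<in> (\<Union>j\<in>{1..l}. A_sind (n - 1) j)"
proof -
  note b = A_basic[OF A]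
  have lr: "l \<in> {1..n}" using l1 ln by auto
  have sm: "\<forall>i\<in>{1..<j}. \<sigma> l < \<sigma> i" if "j \<le> l" for j
  proof
    fix i assume "i \<in> {1..<j}"
    then have "i \<in> {1..n}" "i \<noteq> l" using that ln by auto
    then show "\<sigma> l < \<sigma> i" using b(2) b(3)[of i] b(4)[of i] by auto
  qed
  show ?thesis
  proof (cases "\<exists>p<l. \<sigma> p = 2")
    case True
    then obtain p where p: "p < l" "\<sigma> p = 2" by blast
    have p1: "p \<ge> 1"
    proof (rule ccontr)
      assume "\<not> p \<ge> 1" then have "p = 0" by simp
      then have "\<sigma> p = p" using perm_out[OF b(1)] by simp
      then show False using p `p = 0` by simp
    qed
    have pr: "p \<in> {1..n-1}" using p p1 ln by auto
    have "del n l \<sigma> p = 1" using del_in[OF pr] p b(2) unfolding posdel_def shiftdn_def by simp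
    then have "del n l \<sigma> \<in> A_sind (n - 1) p" using del_in_A[OF A lr pr] p sm[of p] by simp
    then show ?thesis using p p1 by auto
  next
    case False
    then have e: "\<sigma> (l + 1) = 2" using c by blast
    have lr': "l \<in> {1..n-1}" using l1 ln by auto
    have "del n l \<sigma> l = 1" using del_in[OF lr'] e b(2) unfolding posdel_def shiftdn_def by simp
    then have "del n l \<sigma> \<in> A_sind (n - 1) l" using del_in_A[OF A lr lr'] sm[of l] by simp
    then show ?thesis using l1 by auto
  qed
qed

lemma B1_pre:
  assumes t: "\<tau> \<in> A_sind (n - 1) j" and j: "j \<in> {1..l}" and ln: "l \<le> n - 1"
  shows "ins n l 1 \<tau> \<in> A_sind n l \<and> ((\<exists>p<l. ins n l 1 \<tau> p = 2) \<or> ins n l 1 \<tau> (l + 1) = 2)"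
proof -
  have tp: "\<tau> permutes {1..n-1}" and tj: "\<tau> j = 1"
    and a1: "\<not> contains_pattern (n - 1) \<tau> [1,3,2,4]" and a2: "\<not> contains_pattern (n - 1) \<tau> [1,4,2,3]"
    using t unfolding A_iff by blast+
  have lr: "l \<in> {1..n}" using j ln by auto
  have one: "(1::nat) \<in> {1..n}" using lr by auto
  have sl: "ins n l 1 \<tau> l = 1" using ins_eq[OF lr] .
  have "ins n l 1 \<tau> \<in> A_sind n l"
    by (rule ins_in_A[OF t lr one lr sl order.refl ln avoid_ins1[OF tp tj j ln patok1 a1] avoid_ins1[OF tp tj j ln patok2 a2]])
  moreover have "(\<exists>p<l. ins n l 1 \<tau> p = 2) \<or> ins n l 1 \<tau> (l + 1) = 2"
  proof (cases "j < l")
    case True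
    have "j \<in> {1..n}" using j ln by auto
    then have "ins n l 1 \<tau> j = 2" using ins_lt True tj by (simp add: shiftup_def)
    then show ?thesis using True by blast
  next
    case False
    then have "j = l" using j by auto
    have "l + 1 \<in> {1..n}" using ln lr by auto
    then have "ins n l 1 \<tau> (l + 1) = 2" using ins_gt tj `j = l` by (simp add: shiftup_def)
    then show ?thesis by blast
  qed
  ultimately show ?thesis by blast
qed

lemma B3_img:
  assumes A: "\<sigma> \<in> A_sind n l" and l1: "1 \<le> l" and ln: "l + 1 < n" and sn: "\<sigma> n = 2"
  shows "del n n \<sigma> \<in> A_sind (n - 1) l"
proof -
  note b = A_basic[OF A]
  have nr: "n \<in> {1..n}" using ln by auto
  have lr: "l \<in> {1..n-1}" using l1 ln by auto
  have "del n n \<sigma> l = 1" using del_in[OF lr] b(2) sn ln unfolding posdel_def shiftdn_def by simp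
  moreover have "\<forall>i\<in>{1..<l}. \<sigma> n < \<sigma> i"
  proof
    fix i assume i: "i \<in> {1..<l}"
    then have "i \<in> {1..n}" "i \<noteq> l" "i \<noteq> n" using ln by auto
    then show "\<sigma> n < \<sigma> i" using sn b(3)[of i] b(4)[of i] b(5)[of i n] by auto
  qed
  ultimately show ?thesis using del_in_A[OF A nr lr] ln by simp
qed

lemma B3_pre:
  assumes t: "\<tau> \<in> A_sind (n - 1) l" and l1: "1 \<le> l" and ln: "l + 1 < n"
  shows "ins n n 2 \<tau> \<in> A_sind n l \<and> ins n n 2 \<tau> n = 2"
proof -
  have tp: "\<tau> permutes {1..n-1}" and tl: "\<tau> l = 1"
    and a1: "\<not> contains_pattern (n - 1) \<tau> [1,3,2,4]" and a2: "\<not> contains_pattern (n - 1) \<tau> [1,4,2,3]"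
    using t unfolding A_iff by blast+
  have nr: "n \<in> {1..n}" using ln by auto
  have two: "(2::nat) \<in> {1..n}" using ln by auto
  have lr: "l \<in> {1..n}" using l1 ln by auto
  have sl: "ins n n 2 \<tau> l = 1" using ins_lt[OF lr] ln tl by (simp add: shiftup_def)
  have "ins n n 2 \<tau> \<in> A_sind n l"
    by (rule ins_in_A[OF t nr two lr sl]) (use ln avoid_ins2[OF tp tl l1 ln patok1 a1] avoid_ins2[OF tp tl l1 ln patok2 a2] in auto)
  then show ?thesis using ins_eq[OF nr] by simp
qed

lemma A_diag_empty:
  assumes "n \<ge> 2"
  shows "A_sind n n = {}"
proof (rule ccontr)
  assume "A_sind n n \<noteq> {}"
  then obtain \<sigma> where A: "\<sigma> \<in> A_sind n n" by blast
  note b = A_basic[OF A]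
  have "decomp_at n \<sigma> (n - 1)" unfolding decomp_at_def
  proof (intro conjI ballI)
    show "1 \<le> n - 1" "n - 1 < n" using assms by auto
    fix i j assume i: "i \<in> {1..n-1}" and j: "j \<in> {n - 1 + 1..n}"
    then have "j = n" using assms by auto
    moreover have "i \<noteq> n" using i assms by auto
    moreover have "\<sigma> i \<noteq> 1" "\<sigma> i \<in> {1..n}" using b(3)[of i] b(4)[of i] i `i \<noteq> n` by auto
    ultimately show "\<sigma> j < \<sigma> i" using b(2) by auto
  qed
  then show False using A unfolding A_iff by blast
qed

lemma A_out_empty:
  assumes "n \<ge> 1" "l = 0 \<or> l > n"
  shows "A_sind n l = {}"
proof (rule ccontr)
  assume "A_sind n l \<noteq> {}"
  then obtain \<sigma> where A: "\<sigma> \<in> A_sind n l" by blast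
  note b = A_basic[OF A]
  have "l \<notin> {1..n}" using assms by auto
  then have "\<sigma> l = l" using perm_out[OF b(1)] by simp
  then show False using b(2) assms by auto
qed

lemma recur:
  assumes n: "n \<ge> 3" and l1: "1 \<le> l" and ln: "l \<le> n - 1"
  shows "card (A_sind n l) = 2 * card (A_sind (n - 1) l) + (\<Sum>j = 1..l - 1. card (A_sind (n - 1) j))"
proof -
  define B1 where "B1 = {\<sigma> \<in> A_sind n l. (\<exists>p<l. \<sigma> p = 2) \<or> \<sigma> (l + 1) = 2}"
  define B3 where "B3 = {\<sigma> \<in> A_sind n l. \<sigma> n = 2 \<and> l + 1 < n}"
  define U where "U = (\<Union>j\<in>{1..l}. A_sind (n - 1) j)"
  have cover: "A_sind n l = B1 \<union> B3"
  proof
    show "A_sind n l \<subseteq> B1 \<union> B3"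
    proof
      fix \<sigma> assume A: "\<sigma> \<in> A_sind n l"
      note b = A_basic[OF A]
      have "(2::nat) \<in> {1..n}" using n by auto
      then obtain p where p: "\<sigma> p = 2" using permutes_surj[OF b(1)] by (metis surjD)
      have pn: "p \<in> {1..n}"
      proof (rule ccontr)
        assume "p \<notin> {1..n}" then have "\<sigma> p = p" using perm_out[OF b(1)] by simp
        then have "p = 2" using p by simp
        then show False using `p \<notin> {1..n}` n by auto
      qed
      have "p \<noteq> l" using p b(2) by auto
      consider "p < l" | "p = l + 1" | "p = n" | "l + 1 < p" "p < n" using pn `p \<noteq> l` by fastforce
      then show "\<sigma> \<in> B1 \<union> B3"
      proof cases
        case 1 then show ?thesis unfolding B1_def using A p by blast
      next
        case 2 then show ?thesis unfolding B1_def using A p by blast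
      next
        case 3
        show ?thesis
        proof (cases "l + 1 < n")
          case True then show ?thesis unfolding B3_def using A p 3 by blast
        next
          case False
          then have "p = l + 1" using 3 ln n by auto
          then show ?thesis unfolding B1_def using A p by blast
        qed
      next
        case 4
        from excl[OF b(1) b(2) p 4] show ?thesis using A unfolding A_iff by blast
      qed
    qed
    show "B1 \<union> B3 \<subseteq> A_sind n l" unfolding B1_def B3_def by blast
  qed
  have disj: "B1 \<inter> B3 = {}"
  proof (rule ccontr)
    assume "B1 \<inter> B3 \<noteq> {}"
    then obtain \<sigma> where s1: "\<sigma> \<in> B1" and s3: "\<sigma> \<in> B3" by blast
    then have A: "\<sigma> \<in> A_sind n l" and sn: "\<sigma> n = 2" and ln': "l + 1 < n" unfolding B3_def by auto
    note b = A_basic[OF A]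
    from s1 have "(\<exists>p<l. \<sigma> p = 2) \<or> \<sigma> (l + 1) = 2" unfolding B1_def by blast
    then show False
    proof
      assume "\<exists>p<l. \<sigma> p = 2"
      then obtain p where "p < l" "\<sigma> p = 2" by blast
      then have "p = n" using sn b(5)[of p n] by simp
      then show False using `p < l` ln' by simp
    next
      assume "\<sigma> (l + 1) = 2"
      then have "l + 1 = n" using sn b(5)[of "l+1" n] by simp
      then show False using ln' by simp
    qed
  qed
  have fin: "finite B1" "finite B3" using A_finite[of n l] cover by (auto intro: finite_subset)
  have cA: "card (A_sind n l) = card B1 + card B3" using cover disj fin card_Un_disjoint by metis
  have bij1: "bij_betw (del n l) B1 U"
  proof (rule bij_betw_byWitness[where f' = "ins n l 1"])
    show "\<forall>a\<in>B1. ins n l 1 (del n l a) = a"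
    proof
      fix \<sigma> assume "\<sigma> \<in> B1"
      then have A: "\<sigma> \<in> A_sind n l" unfolding B1_def by blast
      have lr: "l \<in> {1..n}" using l1 ln by auto
      show "ins n l 1 (del n l \<sigma>) = \<sigma>" using ins_del[OF A_basic(1)[OF A] lr] A_basic(2)[OF A] by simp
    qed
    show "\<forall>a'\<in>U. del n l (ins n l 1 a') = a'"
    proof
      fix \<tau> assume "\<tau> \<in> U"
      then obtain j where "j \<in> {1..l}" "\<tau> \<in> A_sind (n - 1) j" unfolding U_def by blast
      then have tp: "\<tau> permutes {1..n-1}" unfolding A_iff by blast
      have lr: "l \<in> {1..n}" using l1 ln by auto
      show "del n l (ins n l 1 \<tau>) = \<tau>" using del_ins[OF tp lr] .
    qed
    show "del n l ` B1 \<subseteq> U" unfolding U_def B1_def using B1_img l1 ln by blast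
    show "ins n l 1 ` U \<subseteq> B1"
    proof
      fix x assume "x \<in> ins n l 1 ` U"
      then obtain \<tau> j where x: "x = ins n l 1 \<tau>" and j: "j \<in> {1..l}" and t: "\<tau> \<in> A_sind (n - 1) j"
        unfolding U_def by blast
      show "x \<in> B1" unfolding B1_def x using B1_pre[OF t j ln] by blast
    qed
  qed
  have cU: "card U = (\<Sum>j = 1..l. card (A_sind (n - 1) j))"
    unfolding U_def
  proof (rule card_UN_disjoint)
    show "finite {1..l}" by simp
    show "\<forall>i\<in>{1..l}. finite (A_sind (n - 1) i)" using A_finite by blast
    show "\<forall>i\<in>{1..l}. \<forall>j\<in>{1..l}. i \<noteq> j \<longrightarrow> A_sind (n - 1) i \<inter> A_sind (n - 1) j = {}"
    proof (intro ballI impI)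
      fix i j :: nat assume "i \<noteq> j"
      show "A_sind (n - 1) i \<inter> A_sind (n - 1) j = {}"
      proof (rule ccontr)
        assume "A_sind (n - 1) i \<inter> A_sind (n - 1) j \<noteq> {}"
        then obtain \<sigma> where a: "\<sigma> \<in> A_sind (n - 1) i" and b: "\<sigma> \<in> A_sind (n - 1) j" by blast
        have "\<sigma> i = \<sigma> j" using A_basic(2)[OF a] A_basic(2)[OF b] by simp
        then show False using A_basic(5)[OF a] `i \<noteq> j` by simp
      qed
    qed
  qed
  have c3: "card B3 = card (A_sind (n - 1) l)"
  proof (cases "l + 1 < n")
    case True
    have "bij_betw (del n n) B3 (A_sind (n - 1) l)"
    proof (rule bij_betw_byWitness[where f' = "ins n n 2"])
      have nr: "n \<in> {1..n}" using n by auto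
      show "\<forall>a\<in>B3. ins n n 2 (del n n a) = a"
      proof
        fix \<sigma> assume "\<sigma> \<in> B3"
        then have A: "\<sigma> \<in> A_sind n l" and sn: "\<sigma> n = 2" unfolding B3_def by blast+
        show "ins n n 2 (del n n \<sigma>) = \<sigma>" using ins_del[OF A_basic(1)[OF A] nr] sn by simp
      qed
      show "\<forall>a'\<in>A_sind (n - 1) l. del n n (ins n n 2 a') = a'"
      proof
        fix \<tau> assume "\<tau> \<in> A_sind (n - 1) l"
        then have tp: "\<tau> permutes {1..n-1}" unfolding A_iff by blast
        show "del n n (ins n n 2 \<tau>) = \<tau>" using del_ins[OF tp nr] .
      qed
      show "del n n ` B3 \<subseteq> A_sind (n - 1) l" unfolding B3_def using B3_img l1 by blast
      show "ins n n 2 ` A_sind (n - 1) l \<subseteq> B3" unfolding B3_def using B3_pre l1 True by blast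
    qed
    then show ?thesis by (rule bij_betw_same_card)
  next
    case False
    then have "l = n - 1" using ln by simp
    then have "A_sind (n - 1) l = {}" using A_diag_empty[of "n - 1"] n by simp
    moreover have "B3 = {}" unfolding B3_def using False by simp
    ultimately show ?thesis by simp
  qed
  have "card B1 = card U" using bij_betw_same_card[OF bij1] .
  moreover have "(\<Sum>j = 1..l. card (A_sind (n - 1) j)) = (\<Sum>j = 1..l - 1. card (A_sind (n - 1) j)) + card (A_sind (n - 1) l)"
  proof -
    have e: "{1..l} = insert l {1..l - 1}" using l1 by auto
    have "l \<notin> {1..l - 1}" by auto
    then show ?thesis unfolding e by (simp add: sum.insert add.commute)
  qed
  ultimately show ?thesis using cA cU c3 by simp
qed

lemma small_avoid:
  assumes "n \<le> 3" "length P = 4"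
  shows "\<not> contains_pattern n \<sigma> P"
proof
  assume "contains_pattern n \<sigma> P"
  then obtain \<iota> where i1: "\<forall>i < length P. \<iota> i \<in> {1..n}"
    and i2: "\<forall>i j. i < j \<longrightarrow> j < length P \<longrightarrow> \<iota> i < \<iota> j"
    unfolding contains_pattern_def by blast
  have "\<iota> 0 \<ge> 1" "\<iota> 3 \<le> n" using i1 assms(2) by auto
  moreover have "\<iota> 0 < \<iota> 1" "\<iota> 1 < \<iota> 2" "\<iota> 2 < \<iota> 3" using i2 assms(2) by auto
  ultimately show False using assms(1) by linarith
qed

lemma id_in_A:
  assumes "n \<in> {1,2}"
  shows "id \<in> A_sind n 1"
  unfolding A_iff
proof (intro conjI)
  show "id permutes {1..n}" by simp
  show "\<not> contains_pattern n id [1,3,2,4]" using small_avoid assms by auto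
  show "\<not> contains_pattern n id [1,4,2,3]" using small_avoid assms by auto
  show "id 1 = (1::nat)" by simp
  show "\<not> (\<exists>m. decomp_at n id m)"
  proof
    assume "\<exists>m. decomp_at n id m"
    then obtain m where d: "decomp_at n id m" by blast
    then have "m = 1" "n = 2" using assms unfolding decomp_at_def by auto
    then have "id 2 < id (1::nat)" using d unfolding decomp_at_def by auto
    then show False by simp
  qed
qed

lemma A11: "A_sind 1 1 = {id}"
proof
  show "{id} \<subseteq> A_sind 1 1" using id_in_A[of 1] by simp
  show "A_sind 1 1 \<subseteq> {id}"
  proof
    fix \<sigma> assume "\<sigma> \<in> A_sind 1 1"
    then have "\<sigma> permutes {1}" unfolding A_iff by simp
    then show "\<sigma> \<in> {id}" using permutes_sing by simp
  qed
qed

lemma A21: "A_sind 2 1 = {id}"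
proof
  show "{id} \<subseteq> A_sind 2 1" using id_in_A[of 2] by simp
  show "A_sind 2 1 \<subseteq> {id}"
  proof
    fix \<sigma> assume A: "\<sigma> \<in> A_sind 2 1"
    note b = A_basic[OF A]
    have "\<sigma> = id"
    proof
      fix i
      show "\<sigma> i = id i"
      proof (cases "i \<in> {1..2}")
        case False then show ?thesis using perm_out[OF b(1) False] by simp
      next
        case True
        then consider "i = 1" | "i = 2" by fastforce
        then show ?thesis
        proof cases
          case 1 then show ?thesis using b(2) by simp
        next
          case 2
          have "\<sigma> 2 \<in> {1..2}" "\<sigma> 2 \<noteq> 1" using b(4)[of 2] b(3)[of 2] by auto
          then show ?thesis using 2 by auto
        qed
      qed
    qed
    then show "\<sigma> \<in> {id}" by simp
  qed
qed

lemma Rec_a_sind: "Rec a_sind"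
  unfolding Rec_def
proof (intro conjI allI impI)
  fix n l :: nat assume "1 \<le> n" "l = 0 \<or> l > n"
  then show "a_sind n l = 0" unfolding a_sind_def using A_out_empty by simp
next
  show "a_sind 1 1 = 1" unfolding a_sind_def A11 by simp
next
  show "a_sind 2 1 = 1" unfolding a_sind_def A21 by simp
next
  fix n :: nat assume "2 \<le> n"
  then show "a_sind n n = 0" unfolding a_sind_def using A_diag_empty by simp
next
  fix n l :: nat assume "3 \<le> n" "1 \<le> l \<and> l \<le> n - 1"
  then show "a_sind n l = 2 * a_sind (n - 1) l + (\<Sum>j = 1..l - 1. a_sind (n - 1) j)"
    unfolding a_sind_def using recur by simp
qed

theorem proposition3p1:
  shows "a_sind 1 1 = 1 \<and> a_sind 2 1 = 1 \<and>
    (\<forall>n \<ge> 3. \<forall>l. 1 \<le> l \<and> l \<le> n - 1 \<longrightarrow>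
        a_sind n l = 2 * a_sind (n - 1) l + (\<Sum>j = 1..l - 1. a_sind (n - 1) j)) \<and>
    (\<exists>\<epsilon> > 0. \<forall>x u :: real. \<bar>x\<bar> < \<epsilon> \<and> \<bar>u\<bar> < \<epsilon> \<longrightarrow>
        (\<lambda>n. \<Sum>l = 1..n. real (a_sind n l) * u ^ l * x ^ n) sums
        (u * x * (4 * u - 3 + 4 * x - 3 * u * x - sqrt (1 - 6 * u * x + u\<^sup>2 * x\<^sup>2))
          / (4 * (u - 1 - u * x + 2 * x))))"
proof (intro conjI)
  note R = RecD[OF Rec_a_sind]
  show "a_sind 1 1 = 1" by (rule R(2))
  show "a_sind 2 1 = 1" by (rule R(3))
  show "\<forall>n \<ge> 3. \<forall>l. 1 \<le> l \<and> l \<le> n - 1 \<longrightarrow>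
        a_sind n l = 2 * a_sind (n - 1) l + (\<Sum>j = 1..l - 1. a_sind (n - 1) j)"
    using R(5) by blast
  show "\<exists>\<epsilon> > 0. \<forall>x u :: real. \<bar>x\<bar> < \<epsilon> \<and> \<bar>u\<bar> < \<epsilon> \<longrightarrow>
        (\<lambda>n. \<Sum>l = 1..n. real (a_sind n l) * u ^ l * x ^ n) sums
        (u * x * (4 * u - 3 + 4 * x - 3 * u * x - sqrt (1 - 6 * u * x + u\<^sup>2 * x\<^sup>2))
          / (4 * (u - 1 - u * x + 2 * x)))"
    by (rule Rec_gf[OF Rec_a_sind])
qed

end
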